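(* Every ternary cubic form whose zero locus in $\mathbb{P}^2$ is a cuspidal cubic curve has an apolar star configuration $\mathbb{X}(4)$.
   Context: Let $S=\mathbb{C}[x_0,x_1,x_2]$ and $T=\mathbb{C}[y_0,y_1,y_2]$, where $T$ acts on $S$ by differentiation, $y_j=\partial/\partial x_j$. For a form $F\in S$, $F^\perp=\{\partial\in T:\partial F=0\}$. A finite set of points $\mathbb{X}\subset\mathbb{P}^2=\mathbb{P}(S_1)$ with defining ideal $I(\mathbb{X})\subseteq T$ is apolar to $F$ if $I(\mathbb{X})\subseteq F^\perp$. A star configuration $\mathbb{X}(4)\subset\mathbb{P}^2$: take $4$ linear forms $l_1,\dots,l_4\in T_1$ such that any $3$ of them are linearly independent; $\mathbb{X}(4)$ is the set of $6$ pairwise intersection points of the lines $\{l_i=0\}$. *)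

theory Defs
  imports "HOL-Analysis.Analysis" "HOL-Library.Poly_Mapping"
          "HOL-Computational_Algebra.Factorial_Ring"
begin

text \<open>The same type is used for S = C[x0,x1,x2] and for T = C[y0,y1,y2].\<close>

type_synonym poly3 = "(nat^3) \<Rightarrow>\<^sub>0 complex"

definition mdeg :: "nat^3 \<Rightarrow> nat" where
  "mdeg m = (\<Sum>i\<in>UNIV. m $ i)"

definition homogeneous3 :: "nat \<Rightarrow> poly3 \<Rightarrow> bool" where
  "homogeneous3 d P \<longleftrightarrow> (\<forall>m\<in>Poly_Mapping.keys P. mdeg m = d)"

definition cubic_form :: "poly3 \<Rightarrow> bool" where
  "cubic_form F \<longleftrightarrow> F \<noteq> 0 \<and> homogeneous3 3 F"

definition eval3 :: "poly3 \<Rightarrow> complex^3 \<Rightarrow> complex" where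
  "eval3 P p = (\<Sum>m\<in>Poly_Mapping.keys P. Poly_Mapping.lookup P m * (\<Prod>i\<in>UNIV. (p $ i) ^ (m $ i)))"

definition hcomp :: "nat \<Rightarrow> poly3 \<Rightarrow> poly3" where
  "hcomp d P = Abs_poly_mapping (\<lambda>m. if mdeg m = d then Poly_Mapping.lookup P m else 0)"

text \<open>Action of T on S by differentiation, y_j = d/dx_j:
  y^a applied to x^(a+c) gives prod_i (a_i+c_i)!/c_i! x^c.\<close>
definition dcoeff :: "nat^3 \<Rightarrow> nat^3 \<Rightarrow> nat" where
  "dcoeff a c = (\<Prod>i\<in>UNIV. fact (a $ i + c $ i) div fact (c $ i))"

definition act :: "poly3 \<Rightarrow> poly3 \<Rightarrow> poly3" where
  "act G F = Abs_poly_mapping (\<lambda>c. \<Sum>a\<in>Poly_Mapping.keys G. Poly_Mapping.lookup G a * Poly_Mapping.lookup F (a + c) * of_nat (dcoeff a c))"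

definition perp :: "poly3 \<Rightarrow> poly3 set" where
  "perp F = {G. act G F = 0}"

definition lin3 :: "complex^3 \<Rightarrow> complex^3 \<Rightarrow> complex" where
  "lin3 l v = (\<Sum>i\<in>UNIV. l $ i * v $ i)"

definition e3 :: "3 \<Rightarrow> nat^3" where
  "e3 i = (\<chi> k. if k = i then 1 else 0)"

definition pd :: "3 \<Rightarrow> poly3 \<Rightarrow> poly3" where
  "pd i F = act (Poly_Mapping.single (e3 i) 1) F"

definition pd2 :: "3 \<Rightarrow> 3 \<Rightarrow> poly3 \<Rightarrow> poly3" where
  "pd2 i j F = act (Poly_Mapping.single (e3 i + e3 j) 1) F"

text \<open>Cuspidal cubic: an irreducible cubic form with a singular point p whose tangent
  cone (quadratic part of the Taylor expansion at p) is a double line.\<close>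
definition cuspidal_cubic :: "poly3 \<Rightarrow> bool" where
  "cuspidal_cubic F \<longleftrightarrow> cubic_form F \<and> irreducible F \<and>
     (\<exists>p::complex^3. p \<noteq> 0 \<and> eval3 F p = 0 \<and> (\<forall>i. eval3 (pd i F) p = 0) \<and>
        (\<exists>l::complex^3. l \<noteq> 0 \<and>
           (\<forall>v::complex^3. (\<Sum>i\<in>UNIV. \<Sum>j\<in>UNIV. eval3 (pd2 i j F) p * v $ i * v $ j)
                             = (lin3 l v)^2)))"

text \<open>Vanishing ideal (in T) of a set of points given by a cone X of representatives.\<close>
definition ideal_of :: "(complex^3) set \<Rightarrow> poly3 set" where
  "ideal_of X = {G. \<forall>d. \<forall>p\<in>X. eval3 (hcomp d G) p = 0}"

definition apolar :: "(complex^3) set \<Rightarrow> poly3 \<Rightarrow> bool" where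
  "apolar X F \<longleftrightarrow> ideal_of X \<subseteq> perp F"

definition lin_indep3 :: "complex^3 \<Rightarrow> complex^3 \<Rightarrow> complex^3 \<Rightarrow> bool" where
  "lin_indep3 u v w \<longleftrightarrow>
     (\<forall>a b c::complex. a *s u + b *s v + c *s w = 0 \<longrightarrow> a = 0 \<and> b = 0 \<and> c = 0)"

definition star_forms :: "(nat \<Rightarrow> complex^3) \<Rightarrow> bool" where
  "star_forms l \<longleftrightarrow> (\<forall>i j k. i < 4 \<and> j < 4 \<and> k < 4 \<and> i \<noteq> j \<and> j \<noteq> k \<and> i \<noteq> k
                         \<longrightarrow> lin_indep3 (l i) (l j) (l k))"

text \<open>X(4): the pairwise intersection points of the lines {l_i = 0}, as the set of all
  nonzero representatives in C^3 (the affine cone).\<close>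
definition star_points :: "(nat \<Rightarrow> complex^3) \<Rightarrow> (complex^3) set" where
  "star_points l = {p. p \<noteq> 0 \<and> (\<exists>i j. i < j \<and> j < 4 \<and> lin3 (l i) p = 0 \<and> lin3 (l j) p = 0)}"

end

theory Submission
  imports Defs
begin

declare One_nat_def[simp del]

definition vp :: "complex^3 \<Rightarrow> nat^3 \<Rightarrow> complex" where
  "vp v m = (\<Prod>i\<in>UNIV. (v $ i) ^ (m $ i))"

lemma eval3_superset:
  assumes "finite K" "Poly_Mapping.keys P \<subseteq> K"
  shows "eval3 P v = (\<Sum>m\<in>K. Poly_Mapping.lookup P m * vp v m)"
  unfolding eval3_def vp_def
  by (rule sum.mono_neutral_left) (use assms in \<open>auto simp: in_keys_iff\<close>)

lemma eval3_add: "eval3 (P + Q) v = eval3 P v + eval3 Q v"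
proof -
  let ?K = "Poly_Mapping.keys P \<union> Poly_Mapping.keys Q"
  have "eval3 (P + Q) v = (\<Sum>m\<in>?K. Poly_Mapping.lookup (P+Q) m * vp v m)"
    by (rule eval3_superset) (auto simp: keys_add)
  also have "\<dots> = (\<Sum>m\<in>?K. Poly_Mapping.lookup P m * vp v m) + (\<Sum>m\<in>?K. Poly_Mapping.lookup Q m * vp v m)"
    by (simp add: lookup_add distrib_right sum.distrib)
  also have "\<dots> = eval3 P v + eval3 Q v"
    by (simp add: eval3_superset[symmetric])
  finally show ?thesis .
qed

lemma eval3_zero[simp]: "eval3 0 v = 0" by (simp add: eval3_def)

lemma eval3_single: "eval3 (Poly_Mapping.single a c) v = c * vp v a"
  by (subst eval3_superset[of "{a}"]) auto

lemma eval3_uminus: "eval3 (- P) v = - eval3 P v"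
  by (simp add: eval3_def sum_negf)

lemma eval3_diff: "eval3 (P - Q) v = eval3 P v - eval3 Q v"
  using eval3_add[of P "-Q" v] by (simp add: eval3_uminus)

lemma vp_add: "vp v (a + b) = vp v a * vp v b"
  by (simp add: vp_def power_add prod.distrib)

lemma pm_induct:
  fixes f :: "('a::zero \<Rightarrow>\<^sub>0 'b::ab_group_add)"
  assumes "P 0" "\<And>a c f. P f \<Longrightarrow> P (Poly_Mapping.single a c + f)"
  shows "P f"
proof -
  have "\<And>f. card (Poly_Mapping.keys f) = n \<Longrightarrow> P f" for n
  proof (induction n)
    case 0
    then have "Poly_Mapping.keys f = {}" by simp
    then have "f = 0" by simp
    then show ?case using assms by simp
  next
    case (Suc n)
    then obtain a where a: "a \<in> Poly_Mapping.keys f" by (metis card.empty ex_in_conv nat.distinct(1))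
    define g where "g = f - Poly_Mapping.single a (Poly_Mapping.lookup f a)"
    have kg: "Poly_Mapping.keys g = Poly_Mapping.keys f - {a}"
      by (auto simp: g_def in_keys_iff lookup_minus lookup_single when_def split: if_splits)
    have "card (Poly_Mapping.keys g) = n" using Suc.prems a kg by simp
    then have "P g" by (rule Suc.IH)
    then have "P (Poly_Mapping.single a (Poly_Mapping.lookup f a) + g)" by (rule assms(2))
    then show ?case by (simp add: g_def)
  qed
  then show ?thesis by blast
qed

lemma eval3_mult: "eval3 (P * Q) v = eval3 P v * eval3 Q v"
proof (induction P rule: pm_induct)
  case 1 then show ?case by simp
next
  case (2 a c f)
  have "eval3 (Poly_Mapping.single a c * Q) v = c * vp v a * eval3 Q v"
  proof (induction Q rule: pm_induct)
    case 1 then show ?case by simp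
  next
    case (2 b d g)
    then show ?case by (simp add: distrib_left eval3_add mult_single eval3_single vp_add algebra_simps)
  qed
  then show ?case using 2 by (simp add: distrib_right eval3_add eval3_single)
qed

lemma eval3_one: "eval3 1 v = 1"
proof -
  have "eval3 (Poly_Mapping.single 0 1) v = 1 * vp v 0" by (rule eval3_single)
  then show ?thesis by (simp add: vp_def)
qed

definition mon :: "nat \<Rightarrow> nat \<Rightarrow> nat \<Rightarrow> nat^3" where
  "mon a b c = (\<chi> i. if i = 1 then a else if i = 2 then b else c)"

lemma three_neq[simp]: "(1::3) \<noteq> 2" "(1::3) \<noteq> 3" "(2::3) \<noteq> 3" "(2::3) \<noteq> 1" "(3::3) \<noteq> 1" "(3::3) \<noteq> 2"
  by simp_all

lemma mon_nth[simp]: "mon a b c $ 1 = a" "mon a b c $ 2 = b" "mon a b c $ 3 = c"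
  by (simp_all add: mon_def)

lemma mon_eq[simp]: "mon a b c = mon a' b' c' \<longleftrightarrow> a = a' \<and> b = b' \<and> c = c'"
  by (auto simp: vec_eq_iff forall_3)

lemma mon_all: "m = mon (m$1) (m$2) (m$3)"
  by (simp add: vec_eq_iff forall_3)

lemma mdeg_mon[simp]: "mdeg (mon a b c) = a + b + c"
  by (simp add: mdeg_def sum_3)

lemma prod_3: "prod f (UNIV::3 set) = f 1 * f 2 * f 3"
  unfolding UNIV_3 by (simp add: ac_simps)

lemma vp_mon[simp]: "vp v (mon a b c) = v$1^a * v$2^b * v$3^c"
  by (simp add: vp_def prod_3)

lemma mon_add[simp]: "mon a b c + mon a' b' c' = mon (a+a') (b+b') (c+c')"
  by (simp add: vec_eq_iff forall_3)

lemma mon_zero: "0 = mon 0 0 0"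
  by (simp add: vec_eq_iff forall_3)

lemma e3_mon[simp]: "e3 1 = mon 1 0 0" "e3 2 = mon 0 1 0" "e3 3 = mon 0 0 1"
  by (simp_all add: e3_def vec_eq_iff forall_3)

definition M3 :: "(nat^3) set" where
  "M3 = {mon 3 0 0, mon 0 3 0, mon 0 0 3, mon 2 1 0, mon 2 0 1, mon 1 2 0, mon 0 2 1, mon 1 0 2, mon 0 1 2, mon 1 1 1}"
definition M2 :: "(nat^3) set" where
  "M2 = {mon 2 0 0, mon 0 2 0, mon 0 0 2, mon 1 1 0, mon 1 0 1, mon 0 1 1}"
definition M1 :: "(nat^3) set" where
  "M1 = {mon 1 0 0, mon 0 1 0, mon 0 0 1}"

lemma mdeg_M3: "mdeg m = 3 \<Longrightarrow> m \<in> M3"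
proof -
  assume h: "mdeg m = 3"
  obtain a b c where m: "m = mon a b c" by (metis mon_all)
  from h m have "a + b + c = 3" by simp
  then have "(a,b,c) \<in> {(3,0,0),(0,3,0),(0,0,3),(2,1,0),(2,0,1),(1,2,0),(0,2,1),(1,0,2),(0,1,2),(1,1,1)}"
    by (cases a; cases b; cases c) (auto simp: numeral_eq_Suc)
  then show ?thesis by (auto simp: M3_def m)
qed

lemma mdeg_M2: "mdeg m = 2 \<Longrightarrow> m \<in> M2"
proof -
  assume h: "mdeg m = 2"
  obtain a b c where m: "m = mon a b c" by (metis mon_all)
  from h m have "a + b + c = 2" by simp
  then have "(a,b,c) \<in> {(2,0,0),(0,2,0),(0,0,2),(1,1,0),(1,0,1),(0,1,1)}"
    by (cases a; cases b; cases c) (auto simp: numeral_eq_Suc)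
  then show ?thesis by (auto simp: M2_def m)
qed

lemma mdeg_M1: "mdeg m = 1 \<Longrightarrow> m \<in> M1"
proof -
  assume h: "mdeg m = 1"
  obtain a b c where m: "m = mon a b c" by (metis mon_all)
  from h m have "a + b + c = 1" by simp
  then have "(a,b,c) \<in> {(1,0,0),(0,1,0),(0,0,1)}"
    by (cases a; cases b; cases c) (auto simp: numeral_eq_Suc)
  then show ?thesis by (auto simp: M1_def m)
qed

lemma finite_M: "finite M3" "finite M2" "finite M1"
  by (simp_all add: M3_def M2_def M1_def)

definition cub :: "(nat^3 \<Rightarrow> complex) \<Rightarrow> complex^3 \<Rightarrow> complex" where
  "cub a v = a (mon 3 0 0) * v$1^3 + a (mon 0 3 0) * v$2^3 + a (mon 0 0 3) * v$3^3
     + a (mon 2 1 0) * v$1^2 * v$2 + a (mon 2 0 1) * v$1^2 * v$3 + a (mon 1 2 0) * v$1 * v$2^2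
     + a (mon 0 2 1) * v$2^2 * v$3 + a (mon 1 0 2) * v$1 * v$3^2 + a (mon 0 1 2) * v$2 * v$3^2
     + a (mon 1 1 1) * v$1 * v$2 * v$3"

lemma keys_hom: "homogeneous3 d P \<Longrightarrow> Poly_Mapping.keys P \<subseteq> {m. mdeg m = d}"
  by (auto simp: homogeneous3_def)

lemma eval_cubic:
  assumes "homogeneous3 3 P"
  shows "eval3 P v = cub (Poly_Mapping.lookup P) v"
proof -
  have "Poly_Mapping.keys P \<subseteq> M3" using keys_hom[OF assms] mdeg_M3 by blast
  then have "eval3 P v = (\<Sum>m\<in>M3. Poly_Mapping.lookup P m * vp v m)"
    by (rule eval3_superset[OF finite_M(1)])
  also have "\<dots> = cub (Poly_Mapping.lookup P) v"
    by (simp add: M3_def cub_def algebra_simps)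
  finally show ?thesis .
qed

definition mk3 :: "complex \<Rightarrow> complex \<Rightarrow> complex \<Rightarrow> complex^3" where
  "mk3 x y z = (\<chi> i. if i = 1 then x else if i = 2 then y else z)"

lemma mk3_nth[simp]: "mk3 x y z $ 1 = x" "mk3 x y z $ 2 = y" "mk3 x y z $ 3 = z"
  by (simp_all add: mk3_def)

lemma cub_zero:
  assumes "\<And>v. cub a v = 0"
  shows "\<forall>m\<in>M3. a m = 0"
proof -
  have e: "cub a (mk3 x y z) = 0" for x y z using assms by blast
  have 1: "a (mon 3 0 0) = 0" using e[of 1 0 0] by (simp add: cub_def)
  have 2: "a (mon 0 3 0) = 0" using e[of 0 1 0] by (simp add: cub_def)
  have 3: "a (mon 0 0 3) = 0" using e[of 0 0 1] by (simp add: cub_def)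
  have 4: "a (mon 2 1 0) = 0 \<and> a (mon 1 2 0) = 0" using e[of 1 1 0] e[of 1 "-1" 0] 1 2 by (simp add: cub_def)
  have 5: "a (mon 2 0 1) = 0 \<and> a (mon 1 0 2) = 0" using e[of 1 0 1] e[of 1 0 "-1"] 1 3 by (simp add: cub_def)
  have 6: "a (mon 0 2 1) = 0 \<and> a (mon 0 1 2) = 0" using e[of 0 1 1] e[of 0 1 "-1"] 2 3 by (simp add: cub_def)
  have 7: "a (mon 1 1 1) = 0" using e[of 1 1 1] 1 2 3 4 5 6 by (simp add: cub_def)
  show ?thesis using 1 2 3 4 5 6 7 by (simp add: M3_def)
qed

lemma keys_diff_sub: "Poly_Mapping.keys (P - Q) \<subseteq> Poly_Mapping.keys P \<union> Poly_Mapping.keys Q"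
  by (auto simp: in_keys_iff lookup_minus)

lemma hom_cubic_eq:
  assumes "homogeneous3 3 P" "homogeneous3 3 Q" "\<And>v. eval3 P v = eval3 Q v"
  shows "P = Q"
proof -
  let ?R = "P - Q"
  have kR: "Poly_Mapping.keys ?R \<subseteq> M3"
    using keys_diff_sub[of P Q] keys_hom[OF assms(1)] keys_hom[OF assms(2)] mdeg_M3 by blast
  have hR: "homogeneous3 3 ?R"
    using keys_diff_sub[of P Q] assms(1,2) unfolding homogeneous3_def by blast
  have "cub (Poly_Mapping.lookup ?R) v = 0" for v
    using eval_cubic[OF hR, of v] eval3_diff[of P Q v] assms(3)[of v] by simp
  then have z: "\<forall>m\<in>M3. Poly_Mapping.lookup ?R m = 0" by (rule cub_zero)
  have "Poly_Mapping.lookup ?R m = 0" for m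
  proof (cases "m \<in> M3")
    case True then show ?thesis using z by blast
  next
    case False then show ?thesis using kR by (auto simp: in_keys_iff)
  qed
  then have "?R = 0" by (intro poly_mapping_eqI) simp
  then show ?thesis by simp
qed

lemma mdeg_add: "mdeg (a + b) = mdeg a + mdeg b"
  by (simp add: mdeg_def sum.distrib)

lemma finite_shift: "finite {c::nat^3. e + c \<in> K}" if "finite K"
proof -
  have "{c. e + c \<in> K} = (\<lambda>c. e + c) -` K" by auto
  moreover have "inj (\<lambda>c::nat^3. e + c)" by (simp add: inj_def)
  ultimately show ?thesis using that by (simp add: finite_vimageI)
qed

lemma lookup_act_single:
  "Poly_Mapping.lookup (act (Poly_Mapping.single e 1) F) c = Poly_Mapping.lookup F (e + c) * of_nat (dcoeff e c)"
proof -
  have fin: "finite {c. Poly_Mapping.lookup F (e + c) * of_nat (dcoeff e c) \<noteq> 0}"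
    by (rule finite_subset[OF _ finite_shift[of "Poly_Mapping.keys F" e]]) (auto simp: in_keys_iff)
  show ?thesis unfolding act_def using fin by simp
qed

lemma eval_act_single:
  assumes "homogeneous3 3 F" "finite K" "\<And>c. mdeg e + mdeg c = 3 \<Longrightarrow> c \<in> K"
  shows "eval3 (act (Poly_Mapping.single e 1) F) p =
     (\<Sum>c\<in>K. Poly_Mapping.lookup F (e + c) * of_nat (dcoeff e c) * vp p c)"
proof -
  have "Poly_Mapping.keys (act (Poly_Mapping.single e 1) F) \<subseteq> K"
  proof
    fix c assume "c \<in> Poly_Mapping.keys (act (Poly_Mapping.single e 1) F)"
    then have "e + c \<in> Poly_Mapping.keys F" by (auto simp: in_keys_iff lookup_act_single)
    then have "mdeg (e + c) = 3" using assms(1) by (auto simp: homogeneous3_def)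
    then show "c \<in> K" using assms(3) by (simp add: mdeg_add)
  qed
  then show ?thesis by (simp add: eval3_superset[OF assms(2)] lookup_act_single)
qed

lemma dcoeff_mon[simp]: "dcoeff (mon a b c) (mon a' b' c') =
   (fact (a + a') div fact a') * (fact (b + b') div fact b') * (fact (c + c') div fact c')"
  by (simp add: dcoeff_def prod_3)

lemma e3_sum: "e3 i + e3 j = mon (if i = 1 then 1 else 0) (if i = 2 then 1 else 0) (if i = 3 then 1 else 0)
   + mon (if j = 1 then 1 else 0) (if j = 2 then 1 else 0) (if j = 3 then 1 else 0)"
  by (simp add: e3_def vec_eq_iff forall_3)

definition Phi :: "(nat^3 \<Rightarrow> complex) \<Rightarrow> complex^3 \<Rightarrow> complex^3 \<Rightarrow> complex^3 \<Rightarrow> complex" where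
 "Phi a u v w = a (mon 3 0 0) * u$1 * v$1 * w$1 + a (mon 0 3 0) * u$2 * v$2 * w$2 + a (mon 0 0 3) * u$3 * v$3 * w$3
 + a (mon 2 1 0) / 3 * (u$1 * v$1 * w$2 + u$1 * v$2 * w$1 + u$2 * v$1 * w$1)
 + a (mon 2 0 1) / 3 * (u$1 * v$1 * w$3 + u$1 * v$3 * w$1 + u$3 * v$1 * w$1)
 + a (mon 1 2 0) / 3 * (u$1 * v$2 * w$2 + u$2 * v$1 * w$2 + u$2 * v$2 * w$1)
 + a (mon 0 2 1) / 3 * (u$2 * v$2 * w$3 + u$2 * v$3 * w$2 + u$3 * v$2 * w$2)
 + a (mon 1 0 2) / 3 * (u$1 * v$3 * w$3 + u$3 * v$1 * w$3 + u$3 * v$3 * w$1)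
 + a (mon 0 1 2) / 3 * (u$2 * v$3 * w$3 + u$3 * v$2 * w$3 + u$3 * v$3 * w$2)
 + a (mon 1 1 1) / 6 * (u$1 * v$2 * w$3 + u$1 * v$3 * w$2 + u$2 * v$1 * w$3 + u$2 * v$3 * w$1 + u$3 * v$1 * w$2 + u$3 * v$2 * w$1)"

lemma cub_Phi: "cub a v = Phi a v v v"
  by (simp add: cub_def Phi_def field_simps power2_eq_square power3_eq_cube)

lemma fact_small[simp]: "fact 2 = (2::nat)" "fact 3 = (6::nat)"
  by (simp_all add: fact_numeral)

lemma mdeg_e3[simp]: "mdeg (e3 i) = 1"
  using exhaust_3[of i] by (elim disjE) simp_all

lemma pd_eval:
  assumes "homogeneous3 3 F"
  shows "eval3 (pd i F) p = 3 * Phi (Poly_Mapping.lookup F) p p (axis i 1)"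
proof -
  have "eval3 (pd i F) p = (\<Sum>c\<in>M2. Poly_Mapping.lookup F (e3 i + c) * of_nat (dcoeff (e3 i) c) * vp p c)"
    unfolding pd_def
    by (rule eval_act_single[OF assms finite_M(2)]) (simp add: mdeg_M2)
  also have "\<dots> = 3 * Phi (Poly_Mapping.lookup F) p p (axis i 1)"
    using exhaust_3[of i]
    by (elim disjE) (simp_all add: M2_def Phi_def axis_def field_simps power2_eq_square numeral_2_eq_2[symmetric])
  finally show ?thesis .
qed

lemma pd2_eval1:
  assumes "homogeneous3 3 F"
  shows "eval3 (pd2 i j F) p = 6 * Phi (Poly_Mapping.lookup F) p (axis i 1) (axis j 1)"
proof -
  have "eval3 (pd2 i j F) p = (\<Sum>c\<in>M1. Poly_Mapping.lookup F (e3 i + e3 j + c) * of_nat (dcoeff (e3 i + e3 j) c) * vp p c)"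
    unfolding pd2_def
    by (rule eval_act_single[OF assms finite_M(3)]) (simp add: mdeg_M1 mdeg_add)
  also have "\<dots> = 6 * Phi (Poly_Mapping.lookup F) p (axis i 1) (axis j 1)"
    using exhaust_3[of i] exhaust_3[of j]
    by (elim disjE) (simp_all add: M1_def Phi_def axis_def field_simps power2_eq_square numeral_2_eq_2[symmetric])
  finally show ?thesis .
qed

lemma hess_eval:
  assumes "homogeneous3 3 F"
  shows "(\<Sum>i\<in>UNIV. \<Sum>j\<in>UNIV. eval3 (pd2 i j F) p * v $ i * v $ j) = 6 * Phi (Poly_Mapping.lookup F) p v v"
  by (simp add: pd2_eval1[OF assms] sum_3 Phi_def axis_def field_simps)

lemma Phi_add1: "Phi a (u + u') v w = Phi a u v w + Phi a u' v w"
  by (simp add: Phi_def algebra_simps)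
lemma Phi_smult1: "Phi a (c *s u) v w = c * Phi a u v w"
  by (simp add: Phi_def algebra_simps)
lemma Phi_sym12: "Phi a u v w = Phi a v u w"
  by (simp add: Phi_def algebra_simps)
lemma Phi_sym23: "Phi a u v w = Phi a u w v"
  by (simp add: Phi_def algebra_simps)
lemma Phi_add2: "Phi a v (u + u') w = Phi a v u w + Phi a v u' w"
  by (metis Phi_add1 Phi_sym12)
lemma Phi_add3: "Phi a v w (u + u') = Phi a v w u + Phi a v w u'"
  by (metis Phi_add2 Phi_sym23)
lemma Phi_smult2: "Phi a v (c *s u) w = c * Phi a v u w"
  by (metis Phi_smult1 Phi_sym12)
lemma Phi_smult3: "Phi a v w (c *s u) = c * Phi a v w u"
  by (metis Phi_smult2 Phi_sym23)

lemmas Phi_lin = Phi_add1 Phi_add2 Phi_add3 Phi_smult1 Phi_smult2 Phi_smult3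

lemma Phi_exp:
  "Phi a (x *s u + y *s v + z *s w) (x *s u + y *s v + z *s w) (x *s u + y *s v + z *s w) =
     x^3 * Phi a u u u + y^3 * Phi a v v v + z^3 * Phi a w w w
   + 3 * x^2 * y * Phi a u u v + 3 * x^2 * z * Phi a u u w + 3 * x * y^2 * Phi a u v v
   + 3 * y^2 * z * Phi a v v w + 3 * x * z^2 * Phi a u w w + 3 * y * z^2 * Phi a v w w
   + 6 * x * y * z * Phi a u v w"
proof -
  have s: "Phi a u v u = Phi a u u v" "Phi a v u u = Phi a u u v"
     "Phi a u w u = Phi a u u w" "Phi a w u u = Phi a u u w"
     "Phi a v u v = Phi a u v v" "Phi a v v u = Phi a u v v"
     "Phi a v w v = Phi a v v w" "Phi a w v v = Phi a v v w"
     "Phi a w u w = Phi a u w w" "Phi a w w u = Phi a u w w"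
     "Phi a w v w = Phi a v w w" "Phi a w w v = Phi a v w w"
     "Phi a u w v = Phi a u v w" "Phi a v u w = Phi a u v w" "Phi a v w u = Phi a u v w"
     "Phi a w u v = Phi a u v w" "Phi a w v u = Phi a u v w"
    by (metis Phi_sym12 Phi_sym23)+
  show ?thesis
    by (simp only: Phi_lin s) (simp add: algebra_simps power2_eq_square power3_eq_cube)
qed

lemma lin3_expand: "lin3 u v = u$1 * v$1 + u$2 * v$2 + u$3 * v$3"
  by (simp add: lin3_def sum_3)

lemma lin3_add1: "lin3 (u + u') v = lin3 u v + lin3 u' v"
  by (simp add: lin3_expand algebra_simps)
lemma lin3_add2: "lin3 v (u + u') = lin3 v u + lin3 v u'"
  by (simp add: lin3_expand algebra_simps)
lemma lin3_diff1: "lin3 (u - u') v = lin3 u v - lin3 u' v"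
  by (simp add: lin3_expand algebra_simps)
lemma lin3_diff2: "lin3 v (u - u') = lin3 v u - lin3 v u'"
  by (simp add: lin3_expand algebra_simps)
lemma lin3_smult1: "lin3 (c *s u) v = c * lin3 u v"
  by (simp add: lin3_expand algebra_simps)
lemma lin3_smult2: "lin3 v (c *s u) = c * lin3 v u"
  by (simp add: lin3_expand algebra_simps)
lemma lin3_comm: "lin3 u v = lin3 v u"
  by (simp add: lin3_expand algebra_simps)

lemmas lin3_lin = lin3_add1 lin3_add2 lin3_diff1 lin3_diff2 lin3_smult1 lin3_smult2

definition cross :: "complex^3 \<Rightarrow> complex^3 \<Rightarrow> complex^3" where
  "cross u v = mk3 (u$2 * v$3 - u$3 * v$2) (u$3 * v$1 - u$1 * v$3) (u$1 * v$2 - u$2 * v$1)"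

definition det3 :: "complex^3 \<Rightarrow> complex^3 \<Rightarrow> complex^3 \<Rightarrow> complex" where
  "det3 u v w = lin3 u (cross v w)"

lemma dual_id:
  "det3 u v w *s x = lin3 (cross v w) x *s u + lin3 (cross w u) x *s v + lin3 (cross u v) x *s w"
  by (simp add: vec_eq_iff forall_3 det3_def cross_def lin3_expand algebra_simps)

lemma cross_dots:
  "lin3 (cross v w) u = det3 u v w" "lin3 (cross v w) v = 0" "lin3 (cross v w) w = 0"
  "lin3 (cross w u) v = det3 u v w" "lin3 (cross w u) u = 0" "lin3 (cross w u) w = 0"
  "lin3 (cross u v) w = det3 u v w" "lin3 (cross u v) u = 0" "lin3 (cross u v) v = 0"
  by (simp_all add: det3_def cross_def lin3_expand algebra_simps)

lemma lin_indep3_det: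
  assumes "det3 u v w \<noteq> 0"
  shows "lin_indep3 u v w"
  unfolding lin_indep3_def
proof (intro allI impI)
  fix a b c :: complex
  assume h: "a *s u + b *s v + c *s w = 0"
  have "lin3 (cross v w) (a *s u + b *s v + c *s w) = 0"
       "lin3 (cross w u) (a *s u + b *s v + c *s w) = 0"
       "lin3 (cross u v) (a *s u + b *s v + c *s w) = 0"
    using h by (simp_all add: lin3_expand)
  moreover have "lin3 (cross v w) (a *s u + b *s v + c *s w) = a * det3 u v w"
       "lin3 (cross w u) (a *s u + b *s v + c *s w) = b * det3 u v w"
       "lin3 (cross u v) (a *s u + b *s v + c *s w) = c * det3 u v w"
    by (simp_all add: det3_def cross_def lin3_expand algebra_simps)
  ultimately have "a * det3 u v w = 0" "b * det3 u v w = 0" "c * det3 u v w = 0"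
    by simp_all
  then show "a = 0 \<and> b = 0 \<and> c = 0" using assms by simp
qed

lemma det3_comb:
  "det3 (x1 *s u + x2 *s v + x3 *s w) (y1 *s u + y2 *s v + y3 *s w) (z1 *s u + z2 *s v + z3 *s w)
   = (x1 * (y2 * z3 - y3 * z2) - x2 * (y1 * z3 - y3 * z1) + x3 * (y1 * z2 - y2 * z1)) * det3 u v w"
  by (simp add: det3_def cross_def lin3_expand algebra_simps)

definition Lin :: "complex^3 \<Rightarrow> poly3" where
  "Lin d = Poly_Mapping.single (mon 1 0 0) (d$1) + Poly_Mapping.single (mon 0 1 0) (d$2)
         + Poly_Mapping.single (mon 0 0 1) (d$3)"

lemma eval_Lin: "eval3 (Lin d) v = lin3 d v"
  by (simp add: Lin_def eval3_add eval3_single lin3_expand)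

lemma hom_Lin: "homogeneous3 1 (Lin d)"
proof -
  have "Poly_Mapping.keys (Lin d) \<subseteq> {mon 1 0 0, mon 0 1 0, mon 0 0 1}"
  proof -
    let ?a = "Poly_Mapping.single (mon 1 0 0) (d$1)" and ?b = "Poly_Mapping.single (mon 0 1 0) (d$2)"
      and ?c = "Poly_Mapping.single (mon 0 0 1) (d$3)"
    have "Poly_Mapping.keys (Lin d) \<subseteq> Poly_Mapping.keys ?a \<union> Poly_Mapping.keys ?b \<union> Poly_Mapping.keys ?c"
      unfolding Lin_def using keys_add[of "?a + ?b" ?c] keys_add[of ?a ?b] by blast
    moreover have "Poly_Mapping.keys ?a \<subseteq> {mon 1 0 0}" "Poly_Mapping.keys ?b \<subseteq> {mon 0 1 0}"
       "Poly_Mapping.keys ?c \<subseteq> {mon 0 0 1}" by simp_all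
    ultimately show ?thesis by blast
  qed
  moreover have "\<forall>m\<in>{mon 1 0 0, mon 0 1 0, mon 0 0 1}. mdeg m = 1" by simp
  ultimately show ?thesis unfolding homogeneous3_def by blast
qed

lemma hom_add: "homogeneous3 d P \<Longrightarrow> homogeneous3 d Q \<Longrightarrow> homogeneous3 d (P + Q)"
  unfolding homogeneous3_def using keys_add[of P Q] by blast

lemma hom_mult:
  assumes "homogeneous3 i P" "homogeneous3 j Q"
  shows "homogeneous3 (i + j) (P * Q)"
  unfolding homogeneous3_def
proof
  fix m assume "m \<in> Poly_Mapping.keys (P * Q)"
  then obtain a b where "m = a + b" "a \<in> Poly_Mapping.keys P" "b \<in> Poly_Mapping.keys Q"
    using keys_mult[of P Q] by blast
  then show "mdeg m = i + j" using assms by (simp add: homogeneous3_def mdeg_add)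
qed

lemma hom_eval0:
  assumes "homogeneous3 d P" "d > 0"
  shows "eval3 P 0 = 0"
  unfolding eval3_def
proof (rule sum.neutral, intro ballI)
  fix m assume "m \<in> Poly_Mapping.keys P"
  then have "mdeg m > 0" using assms by (auto simp: homogeneous3_def)
  have "\<exists>i. m $ i \<noteq> 0"
  proof (rule ccontr)
    assume "\<not> (\<exists>i. m $ i \<noteq> 0)"
    then have "mdeg m = 0" by (simp add: mdeg_def)
    then show False using \<open>mdeg m > 0\<close> by simp
  qed
  then obtain i where "m $ i > 0" by auto
  then have "(\<Prod>i\<in>UNIV. ((0::complex^3) $ i) ^ (m $ i)) = 0"
    by (intro prod_zero) auto
  then show "Poly_Mapping.lookup P m * (\<Prod>i\<in>UNIV. ((0::complex^3) $ i) ^ (m $ i)) = 0" by simp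
qed

lemma not_unit_hom:
  assumes "homogeneous3 d P" "d > 0"
  shows "\<not> P dvd 1"
proof
  assume "P dvd 1"
  then obtain k where "1 = P * k" by (auto elim: dvdE)
  then have "eval3 1 0 = eval3 P 0 * eval3 k 0" by (metis eval3_mult)
  then show False using hom_eval0[OF assms] by (simp add: eval3_one)
qed

lemma not_irred:
  assumes hF: "homogeneous3 3 F"
    and ev: "\<And>v. eval3 F v = lin3 d v * (lin3 w1 v * lin3 w2 v + lin3 w3 v * lin3 w4 v)"
  shows "\<not> irreducible F"
proof
  assume irr: "irreducible F"
  let ?Q = "Lin w1 * Lin w2 + Lin w3 * Lin w4"
  have hQ: "homogeneous3 2 ?Q"
    using hom_add hom_mult[OF hom_Lin hom_Lin] by (metis one_add_one)
  have hP: "homogeneous3 3 (Lin d * ?Q)"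
    using hom_mult[OF hom_Lin hQ] by simp
  have "F = Lin d * ?Q"
    by (rule hom_cubic_eq[OF hF hP]) (simp add: ev eval3_mult eval3_add eval_Lin)
  then have "Lin d dvd 1 \<or> ?Q dvd 1" using irr irreducibleD by blast
  then show False using not_unit_hom[OF hom_Lin] not_unit_hom[OF hQ] by auto
qed

definition mfact :: "nat^3 \<Rightarrow> complex" where
  "mfact m = (\<Prod>i\<in>UNIV. of_nat (fact (m $ i)))"

definition wfun :: "complex \<Rightarrow> complex^3 \<Rightarrow> nat^3 \<Rightarrow> complex" where
  "wfun w q m = (if mdeg m = 3 then w * 6 / mfact m * vp q m else 0)"

definition WCube :: "complex \<Rightarrow> complex^3 \<Rightarrow> poly3" where
  "WCube w q = Abs_poly_mapping (wfun w q)"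

lemma lookup_WCube: "Poly_Mapping.lookup (WCube w q) = wfun w q"
proof -
  have "{m. wfun w q m \<noteq> 0} \<subseteq> M3" by (auto simp: wfun_def intro: mdeg_M3 split: if_splits)
  then have "finite {m. wfun w q m \<noteq> 0}" using finite_M(1) finite_subset by blast
  then show ?thesis by (simp add: WCube_def)
qed

lemma hom_WCube: "homogeneous3 3 (WCube w q)"
  by (auto simp: homogeneous3_def in_keys_iff lookup_WCube wfun_def split: if_splits)

lemma mfact_mon[simp]: "mfact (mon a b c) = of_nat (fact a) * of_nat (fact b) * of_nat (fact c)"
  by (simp add: mfact_def prod_3)

lemma fact_small_c: "fact 2 = (2::complex)" "fact 3 = (6::complex)"
  by (simp_all add: fact_numeral)

lemma cub_wfun: "cub (wfun w q) v = w * (lin3 q v)^3"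
  apply (simp add: cub_def wfun_def lin3_expand fact_small_c numeral_2_eq_2[symmetric])
  by algebra

lemma eval_WCube: "eval3 (WCube w q) v = w * (lin3 q v)^3"
  by (simp only: eval_cubic[OF hom_WCube] lookup_WCube cub_wfun)

lemma mfact_nz: "mfact m \<noteq> 0"
  by (simp add: mfact_def)

lemma dcoeff_of: "(of_nat (dcoeff a c) :: complex) = mfact (a + c) / mfact c"
proof -
  have "(of_nat (fact (a $ i + c $ i) div fact (c $ i)) :: complex) =
        of_nat (fact (a $ i + c $ i)) / of_nat (fact (c $ i))" for i
  proof -
    have "fact (c $ i) dvd (fact (a $ i + c $ i) :: nat)" by (rule fact_dvd) simp
    then have "fact (a $ i + c $ i) mod fact (c $ i) = (0::nat)" by simp
    moreover have "(of_nat (fact (a $ i + c $ i) div fact (c $ i)) :: complex) =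
       (of_nat (fact (a $ i + c $ i)) - of_nat (fact (a $ i + c $ i) mod fact (c $ i))) / of_nat (fact (c $ i))"
      by (rule field_char_0_class.of_nat_div)
    ultimately show ?thesis by simp
  qed
  then show ?thesis
    by (simp add: dcoeff_def mfact_def prod_dividef[symmetric] of_nat_prod)
qed

lemma lookup_hcomp: "Poly_Mapping.lookup (hcomp d G) a = (if mdeg a = d then Poly_Mapping.lookup G a else 0)"
proof -
  have "finite {a. (if mdeg a = d then Poly_Mapping.lookup G a else 0) \<noteq> 0}"
    by (rule finite_subset[OF _ finite_keys[of G]]) (simp add: in_keys_iff subset_iff)
  then show ?thesis by (simp add: hcomp_def)
qed

lemma eval_hcomp: "eval3 (hcomp d G) q = (\<Sum>a\<in>Poly_Mapping.keys G. (if mdeg a = d then Poly_Mapping.lookup G a else 0) * vp q a)"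
  by (subst eval3_superset[of "Poly_Mapping.keys G"]) (auto simp: in_keys_iff lookup_hcomp split: if_splits)

lemma act_WCube_zero:
  assumes q: "q \<in> X" and G: "G \<in> ideal_of X"
  shows "(\<Sum>a\<in>Poly_Mapping.keys G. Poly_Mapping.lookup G a * wfun w q (a + c) * of_nat (dcoeff a c)) = 0"
proof -
  define K where "K = (if mdeg c \<le> 3 then w * 6 / mfact c * vp q c else 0)"
  have trm: "Poly_Mapping.lookup G a * wfun w q (a + c) * of_nat (dcoeff a c) =
     K * ((if mdeg a = 3 - mdeg c then Poly_Mapping.lookup G a else 0) * vp q a)" for a
  proof (cases "mdeg a + mdeg c = 3")
    case True
    have e1: "wfun w q (a + c) = w * 6 / mfact (a + c) * (vp q a * vp q c)"
      using True by (simp add: wfun_def mdeg_add vp_add)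
    have e2: "mdeg c \<le> 3" "mdeg a = 3 - mdeg c" using True by arith+
    have K: "K = w * 6 / mfact c * vp q c" using e2 by (simp add: K_def)
    show ?thesis using mfact_nz[of "a + c"] mfact_nz[of c]
      by (simp only: e1 dcoeff_of e2 K if_True) (simp add: field_simps)
  next
    case False
    then have "wfun w q (a + c) = 0" by (simp add: wfun_def mdeg_add)
    moreover have "K * ((if mdeg a = 3 - mdeg c then Poly_Mapping.lookup G a else 0) * vp q a) = 0"
      using False by (cases "mdeg c \<le> 3") (auto simp: K_def)
    ultimately show ?thesis by simp
  qed
  have "eval3 (hcomp (3 - mdeg c) G) q = 0" using q G by (auto simp: ideal_of_def)
  have "(\<Sum>a\<in>Poly_Mapping.keys G. Poly_Mapping.lookup G a * wfun w q (a + c) * of_nat (dcoeff a c))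
     = (\<Sum>a\<in>Poly_Mapping.keys G. K * ((if mdeg a = 3 - mdeg c then Poly_Mapping.lookup G a else 0) * vp q a))"
    by (rule sum.cong) (simp_all only: trm)
  also have "\<dots> = K * (\<Sum>a\<in>Poly_Mapping.keys G. (if mdeg a = 3 - mdeg c then Poly_Mapping.lookup G a else 0) * vp q a)"
    by (rule sum_distrib_left[symmetric])
  also have "\<dots> = K * eval3 (hcomp (3 - mdeg c) G) q"
    by (simp only: eval_hcomp)
  also have "\<dots> = 0" using \<open>eval3 (hcomp (3 - mdeg c) G) q = 0\<close> by simp
  finally show ?thesis .
qed

lemma apolar_of_decomp:
  assumes F: "F = WCube w1 q1 + WCube w2 q2 + WCube w3 q3 + WCube w4 q4"
    and q: "q1 \<in> X" "q2 \<in> X" "q3 \<in> X" "q4 \<in> X"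
  shows "apolar X F"
  unfolding apolar_def perp_def
proof
  fix G assume G: "G \<in> ideal_of X"
  have eq: "(\<lambda>c. \<Sum>a\<in>Poly_Mapping.keys G. Poly_Mapping.lookup G a * Poly_Mapping.lookup F (a + c) * of_nat (dcoeff a c)) = (\<lambda>c. 0)"
  proof
    fix c
    have lF: "\<And>x. Poly_Mapping.lookup F x = wfun w1 q1 x + wfun w2 q2 x + wfun w3 q3 x + wfun w4 q4 x"
      by (simp only: F lookup_add lookup_WCube)
    have "(\<Sum>a\<in>Poly_Mapping.keys G. Poly_Mapping.lookup G a * Poly_Mapping.lookup F (a + c) * of_nat (dcoeff a c))
      = (\<Sum>a\<in>Poly_Mapping.keys G. Poly_Mapping.lookup G a * wfun w1 q1 (a + c) * of_nat (dcoeff a c)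
          + Poly_Mapping.lookup G a * wfun w2 q2 (a + c) * of_nat (dcoeff a c)
          + Poly_Mapping.lookup G a * wfun w3 q3 (a + c) * of_nat (dcoeff a c)
          + Poly_Mapping.lookup G a * wfun w4 q4 (a + c) * of_nat (dcoeff a c))"
      by (rule sum.cong) (simp_all only: lF distrib_left distrib_right)
    also have "\<dots> = (\<Sum>a\<in>Poly_Mapping.keys G. Poly_Mapping.lookup G a * wfun w1 q1 (a + c) * of_nat (dcoeff a c))
      + (\<Sum>a\<in>Poly_Mapping.keys G. Poly_Mapping.lookup G a * wfun w2 q2 (a + c) * of_nat (dcoeff a c))
      + (\<Sum>a\<in>Poly_Mapping.keys G. Poly_Mapping.lookup G a * wfun w3 q3 (a + c) * of_nat (dcoeff a c))
      + (\<Sum>a\<in>Poly_Mapping.keys G. Poly_Mapping.lookup G a * wfun w4 q4 (a + c) * of_nat (dcoeff a c))"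
      by (simp only: sum.distrib)
    also have "\<dots> = 0"
      by (simp only: act_WCube_zero[OF q(1) G] act_WCube_zero[OF q(2) G] act_WCube_zero[OF q(3) G]
          act_WCube_zero[OF q(4) G] add_0_left)
    finally show "(\<Sum>a\<in>Poly_Mapping.keys G. Poly_Mapping.lookup G a * Poly_Mapping.lookup F (a + c) * of_nat (dcoeff a c)) = 0" .
  qed
  have "act G F = Abs_poly_mapping (\<lambda>c. 0)"
    unfolding act_def by (simp only: eq)
  then show "G \<in> {G. act G F = 0}"
    by (metis zero_poly_mapping.abs_eq mem_Collect_eq)
qed

definition cv :: "complex^3 \<Rightarrow> complex^3" where
  "cv x = (\<chi> i. cnj (x $ i))"

lemma lin3_cv_nz:
  assumes "x \<noteq> 0"
  shows "lin3 x (cv x) \<noteq> 0"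
proof -
  have e: "lin3 x (cv x) = complex_of_real ((norm (x$1))^2 + (norm (x$2))^2 + (norm (x$3))^2)"
    by (simp only: lin3_expand cv_def vec_lambda_beta complex_norm_square of_real_add)
  have "x$1 \<noteq> 0 \<or> x$2 \<noteq> 0 \<or> x$3 \<noteq> 0"
    using assms by (auto simp: vec_eq_iff forall_3)
  then have "(norm (x$1))^2 + (norm (x$2))^2 + (norm (x$3))^2 > 0"
    by (auto simp: add_pos_nonneg add_nonneg_pos)
  then show ?thesis using e by (metis of_real_eq_0_iff less_irrefl)
qed

lemma lin3_cross_self: "lin3 l (cross l y) = 0"
  by (simp add: lin3_expand cross_def algebra_simps)

lemma det3_cross_mid: "det3 x (cross l y) z = lin3 x y * lin3 l z - lin3 x l * lin3 y z"
  by (simp add: det3_def lin3_expand cross_def algebra_simps)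

lemma basis_expand:
  assumes "det3 u v w \<noteq> 0"
  shows "x = lin3 ((1 / det3 u v w) *s cross v w) x *s u + lin3 ((1 / det3 u v w) *s cross w u) x *s v
            + lin3 ((1 / det3 u v w) *s cross u v) x *s w"
proof -
  have "det3 u v w *s x = lin3 (cross v w) x *s u + lin3 (cross w u) x *s v + lin3 (cross u v) x *s w"
    by (rule dual_id)
  then have "\<forall>i. det3 u v w * x$i = lin3 (cross v w) x * u$i + lin3 (cross w u) x * v$i + lin3 (cross u v) x * w$i"
    by (simp add: vec_eq_iff)
  then show ?thesis using assms
    by (simp add: vec_eq_iff lin3_smult1 field_simps)
qed

lemma Phi_p_lin: "Phi a p p w = w$1 * Phi a p p (axis 1 1) + w$2 * Phi a p p (axis 2 1) + w$3 * Phi a p p (axis 3 1)"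
  by (simp add: Phi_def axis_def algebra_simps)

lemma Phi_exp_vec:
  assumes "v = x *s u + y *s u' + z *s w"
  shows "Phi a v v v =
     x^3 * Phi a u u u + y^3 * Phi a u' u' u' + z^3 * Phi a w w w
   + 3 * x^2 * y * Phi a u u u' + 3 * x^2 * z * Phi a u u w + 3 * x * y^2 * Phi a u u' u'
   + 3 * y^2 * z * Phi a u' u' w + 3 * x * z^2 * Phi a u w w + 3 * y * z^2 * Phi a u' w w
   + 6 * x * y * z * Phi a u u' w"
  unfolding assms by (rule Phi_exp)

lemma cusp_setup:
  assumes hF: "homogeneous3 3 F"
    and grad: "\<forall>i. eval3 (pd i F) p = 0"
    and hess: "\<forall>v::complex^3. (\<Sum>i\<in>UNIV. \<Sum>j\<in>UNIV. eval3 (pd2 i j F) p * v $ i * v $ j) = (lin3 l v)^2"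
    and l: "l \<noteq> 0"
  shows "\<forall>w. Phi (Poly_Mapping.lookup F) p p w = 0"
    and "\<forall>u v. Phi (Poly_Mapping.lookup F) p u v = lin3 l u * lin3 l v / 6"
    and "lin3 l p = 0"
proof -
  let ?a = "Poly_Mapping.lookup F"
  have g: "Phi ?a p p (axis i 1) = 0" for i using grad pd_eval[OF hF, of i p] by simp
  show G: "\<forall>w. Phi ?a p p w = 0"
  proof
    fix w show "Phi ?a p p w = 0" by (subst Phi_p_lin) (simp only: g mult_zero_right add_0_right)
  qed
  have H: "6 * Phi ?a p u u = (lin3 l u)^2" for u using hess hess_eval[OF hF, of p u] by simp
  have P: "Phi ?a p u v = lin3 l u * lin3 l v / 6" for u v
  proof -
    have "6 * Phi ?a p (u + v) (u + v) = (lin3 l (u + v))^2" by (rule H)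
    then have "6 * Phi ?a p u u + 12 * Phi ?a p u v + 6 * Phi ?a p v v = (lin3 l u + lin3 l v)^2"
      by (simp add: Phi_add2 Phi_add3 lin3_add2 Phi_sym23[of ?a p v u] algebra_simps)
    then show ?thesis using H[of u] H[of v] by (simp add: power2_eq_square algebra_simps)
  qed
  then show "\<forall>u v. Phi ?a p u v = lin3 l u * lin3 l v / 6" by blast
  have "0 = lin3 l p * lin3 l (cv l) / 6" using G P[of p "cv l"] by simp
  then show "lin3 l p = 0" using lin3_cv_nz[OF l] by simp
qed

lemma lin3_zero2: "lin3 x 0 = 0"
  by (simp add: lin3_def)

lemma main_construction:
  assumes hF: "homogeneous3 3 F" and irr: "irreducible F"
    and G: "\<forall>w. Phi (Poly_Mapping.lookup F) p p w = 0"
    and P: "\<forall>u v. Phi (Poly_Mapping.lookup F) p u v = lin3 l u * lin3 l v / 6"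
    and lp: "lin3 l p = 0" and l: "l \<noteq> 0" and p: "p \<noteq> 0"
  shows "\<exists>lf. star_forms lf \<and> apolar (star_points lf) F"
proof -
  define a where "a = Poly_Mapping.lookup F"
  have P': "Phi a u p v = lin3 l u * lin3 l v / 6" "Phi a u v p = lin3 l u * lin3 l v / 6"
       "Phi a p u v = lin3 l u * lin3 l v / 6" for u v
    using P Phi_sym12 Phi_sym23 unfolding a_def by metis+
  have evF: "eval3 F v = Phi a v v v" for v
    by (simp add: eval_cubic[OF hF] cub_Phi a_def)
  define N where "N = lin3 l (cv l)"
  have N: "N \<noteq> 0" using lin3_cv_nz[OF l] by (simp add: N_def)
  define b1 where "b1 = (1 / N) *s cv l"
  define b2 where "b2 = cross l (cv p)"
  have lb1: "lin3 l b1 = 1" using N by (simp add: b1_def lin3_smult2 N_def)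
  have lb2: "lin3 l b2 = 0" by (simp add: b2_def lin3_cross_self)
  have D0: "det3 b1 b2 p \<noteq> 0"
    using lin3_cv_nz[OF p] by (simp add: b2_def det3_cross_mid lp lin3_comm[of b1 l] lb1 lin3_comm[of "cv p" p])
  define D where "D = det3 b1 b2 p"
  define e1 where "e1 = (1/D) *s cross b2 p"
  define e2 where "e2 = (1/D) *s cross p b1"
  define e3 where "e3 = (1/D) *s cross b1 b2"
  have vexp: "v = lin3 e1 v *s b1 + lin3 e2 v *s b2 + lin3 e3 v *s p" for v
    using basis_expand[OF D0, of v] by (simp add: e1_def e2_def e3_def D_def)
  have vals: "Phi a b1 b1 p = 1/6" "Phi a b2 b2 p = 0" "Phi a b1 p p = 0" "Phi a b2 p p = 0"
     "Phi a p p p = 0" "Phi a b1 b2 p = 0"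
    by (simp_all add: P' lb1 lb2 lp)
  define d0 where "d0 = Phi a b2 b2 b2"
  have d0: "d0 \<noteq> 0"
  proof
    assume d0z: "d0 = 0"
    define w where "w = Phi a b1 b1 b1 *s e1 + (3 * Phi a b1 b1 b2) *s e2 + (1/2) *s e3"
    have "eval3 F v = lin3 e1 v * (lin3 e1 v * lin3 w v + lin3 ((3 * Phi a b1 b2 b2) *s e2) v * lin3 e2 v)" for v
    proof -
      have "eval3 F v = Phi a v v v" by (rule evF)
      also have "\<dots> = (lin3 e1 v)^3 * Phi a b1 b1 b1 + (lin3 e2 v)^3 * Phi a b2 b2 b2 + (lin3 e3 v)^3 * Phi a p p p
         + 3 * (lin3 e1 v)^2 * (lin3 e2 v) * Phi a b1 b1 b2 + 3 * (lin3 e1 v)^2 * (lin3 e3 v) * Phi a b1 b1 p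
         + 3 * (lin3 e1 v) * (lin3 e2 v)^2 * Phi a b1 b2 b2
         + 3 * (lin3 e2 v)^2 * (lin3 e3 v) * Phi a b2 b2 p + 3 * (lin3 e1 v) * (lin3 e3 v)^2 * Phi a b1 p p
         + 3 * (lin3 e2 v) * (lin3 e3 v)^2 * Phi a b2 p p
         + 6 * (lin3 e1 v) * (lin3 e2 v) * (lin3 e3 v) * Phi a b1 b2 p"
        by (rule Phi_exp_vec[OF vexp])
      also have "\<dots> = lin3 e1 v * (lin3 e1 v * lin3 w v + lin3 ((3 * Phi a b1 b2 b2) *s e2) v * lin3 e2 v)"
        by (simp add: vals d0z[unfolded d0_def] w_def lin3_lin lin3_comm[of _ v] power2_eq_square power3_eq_cube algebra_simps)
      finally show ?thesis .
    qed
    then have "\<not> irreducible F" by (rule not_irred[OF hF])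
    then show False using irr by simp
  qed
  define lam where "lam = - Phi a b1 b2 b2 / d0"
  define c1 where "c1 = b1 + lam *s b2"
  define nu where "nu = -6 * Phi a c1 c1 b2"
  define B2 where "B2 = b2 + nu *s p"
  define mu where "mu = -2 * Phi a c1 c1 c1"
  define B1 where "B1 = c1 + mu *s p"
  have lc1: "lin3 l c1 = 1" by (simp add: c1_def lin3_lin lb1 lb2)
  have lB1: "lin3 l B1 = 1" by (simp add: B1_def lin3_lin lc1 lp)
  have lB2: "lin3 l B2 = 0" by (simp add: B2_def lin3_lin lb2 lp)
  have f1: "Phi a c1 b2 b2 = 0"
    unfolding c1_def Phi_add1 Phi_smult1 d0_def[symmetric] using d0 by (simp add: lam_def)
  have f2: "Phi a B2 B2 B2 = d0"
    unfolding B2_def by (simp add: Phi_lin P' lb2 lp d0_def)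
  have f3: "Phi a c1 B2 B2 = 0"
    unfolding B2_def by (simp add: Phi_lin P' f1 lb2 lp lc1)
  have f4: "Phi a c1 c1 B2 = 0"
    unfolding B2_def Phi_lin by (simp add: P' lb2 lp lc1 nu_def)
  have f5: "Phi a B1 B1 B1 = 0"
    unfolding B1_def Phi_lin by (simp add: P' lp lc1 mu_def)
  have f6: "Phi a B1 B1 B2 = 0"
    unfolding B1_def by (simp add: Phi_lin P' lp lc1 lB2 f4)
  have f7: "Phi a B1 B2 B2 = 0"
    unfolding B1_def by (simp add: Phi_lin P' lp lc1 lB2 f3)
  have vals2: "Phi a B1 B1 p = 1/6" "Phi a B2 B2 p = 0" "Phi a B1 p p = 0" "Phi a B2 p p = 0"
     "Phi a B1 B2 p = 0"
    by (simp_all add: P' lB1 lB2 lp)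
  have eB1: "B1 = 1 *s b1 + lam *s b2 + mu *s p"
    by (simp add: B1_def c1_def vec_eq_iff algebra_simps)
  have eB2: "B2 = 0 *s b1 + 1 *s b2 + nu *s p"
    by (simp add: B2_def vec_eq_iff algebra_simps)
  have ep: "p = 0 *s b1 + 0 *s b2 + 1 *s p"
    by (simp add: vec_eq_iff)
  have DD: "det3 B1 B2 p = D"
    by (subst eB1, subst eB2, subst (3) ep, subst det3_comb) (simp add: D_def)
  have D1: "det3 B1 B2 p \<noteq> 0" using D0 DD by (simp add: D_def)
  define g1 where "g1 = (1/D) *s cross B2 p"
  define g2 where "g2 = (1/D) *s cross p B1"
  define g3 where "g3 = (1/D) *s cross B1 B2"
  have vexp2: "v = lin3 g1 v *s B1 + lin3 g2 v *s B2 + lin3 g3 v *s p" for v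
    using basis_expand[OF D1, of v] by (simp add: g1_def g2_def g3_def DD)
  have DN: "D \<noteq> 0" using D0 by (simp add: D_def)
  have du: "lin3 g1 B1 = 1" "lin3 g1 B2 = 0" "lin3 g1 p = 0"
     "lin3 g2 B1 = 0" "lin3 g2 B2 = 1" "lin3 g2 p = 0"
     "lin3 g3 B1 = 0" "lin3 g3 B2 = 0" "lin3 g3 p = 1"
    using DN DD
    by (simp_all add: g1_def g2_def g3_def lin3_smult1 det3_def cross_def lin3_expand field_simps, algebra+)
  have evF2: "eval3 F v = (lin3 g1 v)^2 * lin3 g3 v / 2 + d0 * (lin3 g2 v)^3" for v
  proof -
    have "eval3 F v = Phi a v v v" by (rule evF)
    also have "\<dots> = (lin3 g1 v)^3 * Phi a B1 B1 B1 + (lin3 g2 v)^3 * Phi a B2 B2 B2 + (lin3 g3 v)^3 * Phi a p p p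
         + 3 * (lin3 g1 v)^2 * (lin3 g2 v) * Phi a B1 B1 B2 + 3 * (lin3 g1 v)^2 * (lin3 g3 v) * Phi a B1 B1 p
         + 3 * (lin3 g1 v) * (lin3 g2 v)^2 * Phi a B1 B2 B2
         + 3 * (lin3 g2 v)^2 * (lin3 g3 v) * Phi a B2 B2 p + 3 * (lin3 g1 v) * (lin3 g3 v)^2 * Phi a B1 p p
         + 3 * (lin3 g2 v) * (lin3 g3 v)^2 * Phi a B2 p p
         + 6 * (lin3 g1 v) * (lin3 g2 v) * (lin3 g3 v) * Phi a B1 B2 p"
      by (rule Phi_exp_vec[OF vexp2])
    also have "\<dots> = (lin3 g1 v)^2 * lin3 g3 v / 2 + d0 * (lin3 g2 v)^3"
      by (simp add: vals2 vals(5) f2 f5 f6 f7)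
    finally show ?thesis .
  qed
  define cf :: "nat \<Rightarrow> complex^3" where
    "cf = (\<lambda>i. if i = 0 then mk3 1 0 0 else if i = 1 then mk3 1 0 (-1) else if i = 2 then mk3 1 1 1 else mk3 0 1 0)"
  define lf where "lf = (\<lambda>i::nat. (cf i $ 1) *s B1 + (cf i $ 2) *s B2 + (cf i $ 3) *s p)"
  have detlf: "det3 (lf i) (lf j) (lf k) =
     (cf i $ 1 * (cf j $ 2 * cf k $ 3 - cf j $ 3 * cf k $ 2) - cf i $ 2 * (cf j $ 1 * cf k $ 3 - cf j $ 3 * cf k $ 1)
      + cf i $ 3 * (cf j $ 1 * cf k $ 2 - cf j $ 2 * cf k $ 1)) * det3 B1 B2 p" for i j k
    unfolding lf_def by (rule det3_comb)
  have four: "i < 4 \<Longrightarrow> i = 0 \<or> i = 1 \<or> i = 2 \<or> i = (3::nat)" for i by arith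
  have sf: "star_forms lf"
    unfolding star_forms_def
  proof (intro allI impI)
    fix i j k :: nat
    assume h: "i < 4 \<and> j < 4 \<and> k < 4 \<and> i \<noteq> j \<and> j \<noteq> k \<and> i \<noteq> k"
    have "(cf i $ 1 * (cf j $ 2 * cf k $ 3 - cf j $ 3 * cf k $ 2) - cf i $ 2 * (cf j $ 1 * cf k $ 3 - cf j $ 3 * cf k $ 1)
      + cf i $ 3 * (cf j $ 1 * cf k $ 2 - cf j $ 2 * cf k $ 1)) \<noteq> 0"
    proof -
      have hi: "i = 0 \<or> i = 1 \<or> i = 2 \<or> i = 3" using four[of i] h by blast
      have hj: "j = 0 \<or> j = 1 \<or> j = 2 \<or> j = 3" using four[of j] h by blast
      have hk: "k = 0 \<or> k = 1 \<or> k = 2 \<or> k = 3" using four[of k] h by blast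
      show ?thesis using hi hj hk h by (elim disjE) (simp_all add: cf_def)
    qed
    then show "lin_indep3 (lf i) (lf j) (lf k)"
      using D1 by (intro lin_indep3_det) (simp add: detlf)
  qed
  have lf_simps: "lf 0 = B1" "lf 1 = B1 - p" "lf 2 = B1 + B2 + p" "lf 3 = B2"
    by (simp_all add: lf_def cf_def vec_eq_iff)
  have du': "lin3 B1 g1 = 1" "lin3 B2 g1 = 0" "lin3 p g1 = 0"
     "lin3 B1 g2 = 0" "lin3 B2 g2 = 1" "lin3 p g2 = 0"
     "lin3 B1 g3 = 0" "lin3 B2 g3 = 0" "lin3 p g3 = 1"
    using du by (simp_all add: lin3_comm)
  have nz: "q \<noteq> 0" if "lin3 B1 q \<noteq> 0 \<or> lin3 B2 q \<noteq> 0 \<or> lin3 p q \<noteq> 0" for q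
    using that lin3_zero2 by auto
  have mem: "q \<in> star_points lf" if "q \<noteq> 0" "i < j" "j < 4" "lin3 (lf i) q = 0" "lin3 (lf j) q = 0" for q i j
    using that unfolding star_points_def by blast
  have mem1: "g1 + g3 \<in> star_points lf"
    by (rule mem[of _ 1 3], rule nz) (simp_all add: lf_simps lin3_lin du')
  have mem2: "g1 - g3 \<in> star_points lf"
    by (rule mem[of _ 2 3], rule nz) (simp_all add: lf_simps lin3_lin du')
  have mem3: "g3 \<in> star_points lf"
    by (rule mem[of _ 0 3], rule nz) (simp_all add: lf_simps lin3_lin du')
  have mem4: "g2 \<in> star_points lf"
    by (rule mem[of _ 0 1], rule nz) (simp_all add: lf_simps lin3_lin du')
  have hW: "homogeneous3 3 (WCube (1/12) (g1 + g3) + WCube (-1/12) (g1 - g3) + WCube (-1/6) g3 + WCube d0 g2)"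
    by (intro hom_add hom_WCube)
  have decomp: "F = WCube (1/12) (g1 + g3) + WCube (-1/12) (g1 - g3) + WCube (-1/6) g3 + WCube d0 g2"
  proof (rule hom_cubic_eq[OF hF hW])
    fix v
    show "eval3 F v = eval3 (WCube (1/12) (g1 + g3) + WCube (-1/12) (g1 - g3) + WCube (-1/6) g3 + WCube d0 g2) v"
      unfolding evF2 eval3_add eval_WCube lin3_add1 lin3_diff1
      by (simp add: field_simps power2_eq_square power3_eq_cube)
  qed
  show ?thesis
    by (intro exI[of _ lf] conjI sf apolar_of_decomp[OF decomp mem1 mem2 mem3 mem4])
qed

theorem proposition4p2:
  fixes F :: poly3
  assumes "cubic_form F" and "cuspidal_cubic F"
  shows "\<exists>l. star_forms l \<and> apolar (star_points l) F"
proof -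
  have hF: "homogeneous3 3 F" using assms(1) by (simp add: cubic_form_def)
  obtain p l where irr: "irreducible F" and p: "p \<noteq> 0"
    and grad: "\<forall>i. eval3 (pd i F) p = 0" and l: "l \<noteq> 0"
    and hess: "\<forall>v::complex^3. (\<Sum>i\<in>UNIV. \<Sum>j\<in>UNIV. eval3 (pd2 i j F) p * v $ i * v $ j) = (lin3 l v)^2"
    using assms(2) unfolding cuspidal_cubic_def by blast
  note cs = cusp_setup[OF hF grad hess l]
  show ?thesis by (rule main_construction[OF hF irr cs(1) cs(2) cs(3) l p])
qed

end
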